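(* Suppose Assumptions 1, 2 and 4 hold, let $R\ge1$, and run gradient descent with constant step size $\eta_t=1/\beta(R)$, where $\beta(R)=2L^2R^{2L-2}(\beta+G)$. Then there exists a time $t$ with $W(t)\notin B(R)$, i.e. $\max_{1\le k\le L}\|W_k(t)\|_F>R$.
   Context: Setting: data $(x_i,y_i)_{i=1}^n$ with $x_i\in\mathbb{R}^d$, $\|x_i\|\le 1$, $y_i\in\{-1,+1\}$; $z_i:=y_ix_i$; the data are linearly separable. A depth-$L$ linear network is $W=(W_L,\dots,W_1)$ with $W_k\in\mathbb{R}^{d_k\times d_{k-1}}$, $d_0=d$, $d_L=1$, $w_{\mathrm{prod}}:=(W_L\cdots W_1)^\top$, and $\mathcal{R}(W)=\frac1n\sum_{i=1}^n\ell(\langle w_{\mathrm{prod}},z_i\rangle)$. $B(R):=\{W:\max_k\|W_k\|_F\le R\}$. Gradient descent: $W(t+1)=W(t)-\eta_t\nabla\mathcal{R}(W(t))$, $t=0,1,2,\dots$. Assumption 1: $\ell$ is continuously differentiable, $\ell'<0$ everywhere, $\lim_{x\to-\infty}\ell(x)=\infty$, $\lim_{x\to\infty}\ell(x)=0$. Assumption 2: $\nabla\mathcal{R}(W(0))\ne0$ and $\mathcal{R}(W(0))\le\ell(0)$. Assumption 4: $\ell'$ is $\beta$-Lipschitz and $|\ell'|\le G$. *)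

theory Defs
  imports "HOL-Analysis.Analysis"
begin

text \<open>A depth-L linear network is represented by W :: nat => nat => nat => real,
  where W k i j is entry (i,j) of the layer matrix W_k (k in 1..L, i < dm k, j < dm (k-1)).
  Dimensions are dm :: nat => nat with dm 0 = d, dm L = 1.\<close>

type_synonym network = "nat \<Rightarrow> nat \<Rightarrow> nat \<Rightarrow> real"

primrec mprod :: "(nat \<Rightarrow> nat) \<Rightarrow> network \<Rightarrow> nat \<Rightarrow> nat \<Rightarrow> nat \<Rightarrow> real" where
  "mprod dm W 0 i j = (if i = j then 1 else 0)"
| "mprod dm W (Suc k) i j = (\<Sum>m<dm k. W (Suc k) i m * mprod dm W k m j)"

text \<open>w_prod = (W_L ... W_1)^T, a vector in R^d (component j).\<close>
definition wprod :: "(nat \<Rightarrow> nat) \<Rightarrow> nat \<Rightarrow> network \<Rightarrow> nat \<Rightarrow> real" where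
  "wprod dm L W j = mprod dm W L 0 j"

definition risk :: "(real \<Rightarrow> real) \<Rightarrow> nat \<Rightarrow> (nat \<Rightarrow> nat \<Rightarrow> real) \<Rightarrow> (nat \<Rightarrow> nat) \<Rightarrow> nat \<Rightarrow> network \<Rightarrow> real" where
  "risk l n z dm L W = (1 / real n) * (\<Sum>i<n. l (\<Sum>j<dm 0. wprod dm L W j * z i j))"

definition upd_entry :: "network \<Rightarrow> nat \<Rightarrow> nat \<Rightarrow> nat \<Rightarrow> real \<Rightarrow> network" where
  "upd_entry W k i j s = W(k := (W k)(i := (W k i)(j := s)))"

definition grad_entry :: "(network \<Rightarrow> real) \<Rightarrow> network \<Rightarrow> nat \<Rightarrow> nat \<Rightarrow> nat \<Rightarrow> real" where
  "grad_entry f W k i j = deriv (\<lambda>s. f (upd_entry W k i j s)) (W k i j)"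

definition frob :: "(nat \<Rightarrow> nat) \<Rightarrow> network \<Rightarrow> nat \<Rightarrow> real" where
  "frob dm W k = sqrt (\<Sum>i<dm k. \<Sum>j<dm (k - 1). (W k i j)\<^sup>2)"

definition betaR :: "nat \<Rightarrow> real \<Rightarrow> real \<Rightarrow> real \<Rightarrow> real" where
  "betaR L R \<beta> G = 2 * (real L)\<^sup>2 * R ^ (2 * L - 2) * (\<beta> + G)"

end

theory Submission
  imports Defs
begin


primrec mv :: "(nat\<Rightarrow>nat) \<Rightarrow> network \<Rightarrow> nat \<Rightarrow> (nat\<Rightarrow>real) \<Rightarrow> nat \<Rightarrow> real" where
  "mv dm W 0 z i = z i"
| "mv dm W (Suc k) z i = (\<Sum>m<dm k. W (Suc k) i m * mv dm W k z m)"

primrec lin :: "(nat\<Rightarrow>nat) \<Rightarrow> network \<Rightarrow> network \<Rightarrow> nat \<Rightarrow> (nat\<Rightarrow>real) \<Rightarrow> nat \<Rightarrow> real" where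
  "lin dm W D 0 z i = 0"
| "lin dm W D (Suc k) z i = (\<Sum>m<dm k. D (Suc k) i m * mv dm W k z m + W (Suc k) i m * lin dm W D k z m)"

primrec quad :: "(nat\<Rightarrow>nat) \<Rightarrow> network \<Rightarrow> network \<Rightarrow> nat \<Rightarrow> (nat\<Rightarrow>real) \<Rightarrow> nat \<Rightarrow> real" where
  "quad dm W D 0 z i = 0"
| "quad dm W D (Suc k) z i = (\<Sum>m<dm k. 2 * D (Suc k) i m * lin dm W D k z m + W (Suc k) i m * quad dm W D k z m)"

lemma mv_Suc_fun: "mv dm W (Suc k) z = (\<lambda>i. \<Sum>m<dm k. W (Suc k) i m * mv dm W k z m)"
  by (rule ext) simp
lemma lin_Suc_fun: "lin dm W D (Suc k) z = (\<lambda>i. \<Sum>m<dm k. D (Suc k) i m * mv dm W k z m + W (Suc k) i m * lin dm W D k z m)"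
  by (rule ext) simp
lemma quad_Suc_fun: "quad dm W D (Suc k) z = (\<lambda>i. \<Sum>m<dm k. 2 * D (Suc k) i m * lin dm W D k z m + W (Suc k) i m * quad dm W D k z m)"
  by (rule ext) simp

definition aff :: "network \<Rightarrow> network \<Rightarrow> real \<Rightarrow> network" where
  "aff A D s = (\<lambda>k i j. A k i j + s * D k i j)"

lemma mv_mprod: "i < dm k \<Longrightarrow> mv dm W k z i = (\<Sum>j<dm 0. mprod dm W k i j * z j)"
proof (induction k arbitrary: i)
  case 0
  then show ?case by (simp add: if_distrib if_distribR cong: if_cong)
next
  case (Suc k)
  have "mv dm W (Suc k) z i = (\<Sum>m<dm k. \<Sum>j<dm 0. W (Suc k) i m * (mprod dm W k m j * z j))"
    by (simp add: Suc sum_distrib_left)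
  also have "\<dots> = (\<Sum>j<dm 0. \<Sum>m<dm k. W (Suc k) i m * mprod dm W k m j * z j)"
    by (subst sum.swap) (simp add: mult.assoc)
  also have "\<dots> = (\<Sum>j<dm 0. mprod dm W (Suc k) i j * z j)"
    by (simp add: sum_distrib_right)
  finally show ?case .
qed

lemma risk_mv: "0 < dm L \<Longrightarrow> risk l n z dm L W = (1 / real n) * (\<Sum>i<n. l (mv dm W L (z i) 0))"
  unfolding risk_def wprod_def by (simp add: mv_mprod)

lemma d_mv: "((\<lambda>s. mv dm (aff A D s) k z i) has_real_derivative lin dm (aff A D s) D k z i) (at s)"
proof (induction k arbitrary: i)
  case 0
  then show ?case by simp
next
  case (Suc k)
  show ?case unfolding mv.simps lin.simps
    apply (rule DERIV_sum)
    apply (unfold aff_def)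
    apply (rule derivative_eq_intros | rule Suc[unfolded aff_def] | simp)+
    done
qed

lemma d_lin: "((\<lambda>s. lin dm (aff A D s) D k z i) has_real_derivative quad dm (aff A D s) D k z i) (at s)"
proof (induction k arbitrary: i)
  case 0
  then show ?case by simp
next
  case (Suc k)
  show ?case unfolding lin.simps quad.simps
    apply (rule DERIV_sum)
    apply (rule derivative_eq_intros d_mv Suc | simp add: aff_def)+
    done
qed

lemma d_risk:
  assumes "0 < dm L" "\<forall>t. (l has_real_derivative dl t) (at t)"
  shows "((\<lambda>s. risk l n z dm L (aff A D s)) has_real_derivative
     (1 / real n) * (\<Sum>i<n. dl (mv dm (aff A D s) L (z i) 0) * lin dm (aff A D s) D L (z i) 0)) (at s)"
  unfolding risk_mv[where dm=dm and L=L, OF assms(1)]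
  apply (rule DERIV_cmult)
  apply (rule DERIV_sum)
  apply (rule DERIV_chain2[where f=l])
  using assms(2) d_mv apply auto
  done

definition ev :: "nat \<times> nat \<times> nat \<Rightarrow> network" where
  "ev p = (\<lambda>k i j. if (k, i, j) = p then 1 else 0)"

lemma aff_upd: "upd_entry W k i j s = aff (upd_entry W k i j 0) (ev (k, i, j)) s"
  unfolding upd_entry_def aff_def ev_def by (auto simp: fun_eq_iff)

lemma aff_upd0: "aff (upd_entry W k i j 0) (ev (k, i, j)) (W k i j) = W"
  unfolding upd_entry_def aff_def ev_def by (auto simp: fun_eq_iff)

lemma grad_formula:
  assumes "0 < dm L" "\<forall>t. (l has_real_derivative dl t) (at t)"
  shows "grad_entry (risk l n z dm L) W k i j =
     (1 / real n) * (\<Sum>r<n. dl (mv dm W L (z r) 0) * lin dm W (ev (k, i, j)) L (z r) 0)"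
proof -
  have "((\<lambda>s. risk l n z dm L (upd_entry W k i j s)) has_real_derivative
     (1 / real n) * (\<Sum>r<n. dl (mv dm W L (z r) 0) * lin dm W (ev (k, i, j)) L (z r) 0)) (at (W k i j))"
    using d_risk[where dm=dm and L=L and l=l and dl=dl, OF assms, of n z "upd_entry W k i j 0" "ev (k,i,j)" "W k i j"]
    unfolding aff_upd0 aff_upd[symmetric] .
  then show ?thesis unfolding grad_entry_def by (rule DERIV_imp_deriv)
qed

lemma lin_lincomb: "lin dm W (\<lambda>k i j. c * D1 k i j + D2 k i j) k z i = c * lin dm W D1 k z i + lin dm W D2 k z i"
  by (induction k arbitrary: i) (simp_all add: algebra_simps sum.distrib sum_distrib_left)

lemma lin_zero: "lin dm W (\<lambda>k i j. 0) k z i = 0"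
  by (induction k arbitrary: i) simp_all

lemma lin_sum:
  assumes "finite F"
  shows "lin dm W (\<lambda>k i j. \<Sum>p\<in>F. c p * ev p k i j) k z i = (\<Sum>p\<in>F. c p * lin dm W (ev p) k z i)"
  using assms
proof (induction F rule: finite_induct)
  case empty
  then show ?case using lin_zero by simp
next
  case (insert x F)
  have "lin dm W (\<lambda>k i j. \<Sum>p\<in>insert x F. c p * ev p k i j) k z i
      = lin dm W (\<lambda>k i j. c x * ev x k i j + (\<Sum>p\<in>F. c p * ev p k i j)) k z i"
    using insert by simp
  also have "\<dots> = c x * lin dm W (ev x) k z i + lin dm W (\<lambda>k i j. \<Sum>p\<in>F. c p * ev p k i j) k z i"
    by (rule lin_lincomb)
  finally show ?case using insert by simp
qed

lemma lin_cong:
  assumes "\<forall>q\<in>{1..k}. \<forall>a<dm q. \<forall>b<dm (q - 1). D q a b = D' q a b" "i < dm k"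
  shows "lin dm W D k z i = lin dm W D' k z i"
  using assms
proof (induction k arbitrary: i)
  case 0
  then show ?case by simp
next
  case (Suc k)
  have h: "\<forall>q\<in>{1..k}. \<forall>a<dm q. \<forall>b<dm (q - 1). D q a b = D' q a b" using Suc.prems by auto
  show ?case unfolding lin.simps
    apply (rule sum.cong, simp)
    using Suc.IH[OF h] Suc.prems by auto
qed

definition PP :: "(nat\<Rightarrow>nat) \<Rightarrow> nat \<Rightarrow> (nat \<times> nat \<times> nat) set" where
  "PP dm L = (SIGMA k:{1..L}. SIGMA i:{..<dm k}. {..<dm (k - 1)})"

lemma finite_PP: "finite (PP dm L)"
  unfolding PP_def by auto

lemma lin_decomp:
  assumes "i < dm L"
  shows "lin dm W D L z i = (\<Sum>p\<in>PP dm L. D (fst p) (fst (snd p)) (snd (snd p)) * lin dm W (ev p) L z i)"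
proof -
  have "lin dm W D L z i = lin dm W (\<lambda>k i j. \<Sum>p\<in>PP dm L. D (fst p) (fst (snd p)) (snd (snd p)) * ev p k i j) L z i"
  proof (rule lin_cong[where dm=dm and k=L, OF _ assms], intro ballI allI impI)
    fix q a b assume q: "q \<in> {1..L}" "a < dm q" "b < dm (q - 1)"
    have "(\<Sum>p\<in>PP dm L. D (fst p) (fst (snd p)) (snd (snd p)) * ev p q a b)
        = (\<Sum>p\<in>PP dm L. if p = (q, a, b) then D q a b else 0)"
      by (rule sum.cong) (auto simp: ev_def)
    also have "\<dots> = D q a b" using q finite_PP[of dm L] by (simp add: PP_def)
    finally show "D q a b = (\<Sum>p\<in>PP dm L. D (fst p) (fst (snd p)) (snd (snd p)) * ev p q a b)" by simp
  qed
  then show ?thesis by (simp add: lin_sum[OF finite_PP])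
qed

lemma matvec_L2:
  assumes "finite I" "finite J"
  shows "L2_set (\<lambda>i. \<Sum>m\<in>J. M i m * h m) I \<le> sqrt (\<Sum>i\<in>I. \<Sum>m\<in>J. (M i m)\<^sup>2) * L2_set h J"
proof -
  have row: "(\<Sum>m\<in>J. M i m * h m)\<^sup>2 \<le> (\<Sum>m\<in>J. (M i m)\<^sup>2) * (L2_set h J)\<^sup>2" for i
  proof -
    have "\<bar>\<Sum>m\<in>J. M i m * h m\<bar> \<le> (\<Sum>m\<in>J. \<bar>M i m\<bar> * \<bar>h m\<bar>)"
      by (rule order_trans[OF sum_abs]) (simp add: abs_mult)
    also have "\<dots> \<le> L2_set (M i) J * L2_set h J" by (rule L2_set_mult_ineq)
    finally have "\<bar>\<Sum>m\<in>J. M i m * h m\<bar> \<le> L2_set (M i) J * L2_set h J" .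
    then have "(\<Sum>m\<in>J. M i m * h m)\<^sup>2 \<le> (L2_set (M i) J * L2_set h J)\<^sup>2"
      by (metis abs_ge_zero power2_abs power_mono)
    also have "\<dots> = (\<Sum>m\<in>J. (M i m)\<^sup>2) * (L2_set h J)\<^sup>2"
      by (simp add: power_mult_distrib L2_set_def sum_nonneg)
    finally show ?thesis .
  qed
  have "(\<Sum>i\<in>I. (\<Sum>m\<in>J. M i m * h m)\<^sup>2) \<le> (\<Sum>i\<in>I. (\<Sum>m\<in>J. (M i m)\<^sup>2) * (L2_set h J)\<^sup>2)"
    by (rule sum_mono[OF row])
  also have "\<dots> = (\<Sum>i\<in>I. \<Sum>m\<in>J. (M i m)\<^sup>2) * (L2_set h J)\<^sup>2"
    by (simp add: sum_distrib_right)
  finally have "sqrt (\<Sum>i\<in>I. (\<Sum>m\<in>J. M i m * h m)\<^sup>2) \<le> sqrt ((\<Sum>i\<in>I. \<Sum>m\<in>J. (M i m)\<^sup>2) * (L2_set h J)\<^sup>2)"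
    by (rule real_sqrt_le_mono)
  then show ?thesis
    by (simp add: L2_set_def real_sqrt_mult sum_nonneg)
qed

lemma matvec_frob:
  "L2_set (\<lambda>i. \<Sum>m<dm k. V (Suc k) i m * h m) {..<dm (Suc k)} \<le> frob dm V (Suc k) * L2_set h {..<dm k}"
  using matvec_L2[of "{..<dm (Suc k)}" "{..<dm k}" "V (Suc k)" h] unfolding frob_def by simp

lemma L2_sum2: "L2_set (\<lambda>i. \<Sum>m\<in>J. f i m + g i m) I \<le> L2_set (\<lambda>i. \<Sum>m\<in>J. f i m) I + L2_set (\<lambda>i. \<Sum>m\<in>J. g i m) I"
  unfolding sum.distrib by (rule L2_set_triangle_ineq)

lemma frob_nonneg: "0 \<le> frob dm V k"
  unfolding frob_def by (simp add: sum_nonneg)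

lemma mv_bound:
  assumes "\<forall>q\<in>{1..k}. frob dm V q \<le> R" "0 \<le> R"
  shows "L2_set (mv dm V k z) {..<dm k} \<le> R ^ k * L2_set z {..<dm 0}"
  using assms
proof (induction k)
  case 0
  then show ?case by simp
next
  case (Suc k)
  have ih: "L2_set (mv dm V k z) {..<dm k} \<le> R ^ k * L2_set z {..<dm 0}" using Suc by auto
  have "L2_set (mv dm V (Suc k) z) {..<dm (Suc k)} \<le> frob dm V (Suc k) * L2_set (mv dm V k z) {..<dm k}"
    using matvec_frob[where dm=dm and k=k and V=V and h="mv dm V k z"] by (simp add: mv_Suc_fun)
  also have "\<dots> \<le> R * (R ^ k * L2_set z {..<dm 0})"
    using Suc.prems ih by (intro mult_mono) (auto simp: frob_nonneg)
  finally show ?case by (simp del: mv.simps)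
qed

definition SS :: "(nat\<Rightarrow>nat) \<Rightarrow> network \<Rightarrow> nat \<Rightarrow> real" where
  "SS dm D k = (\<Sum>q\<in>{1..k}. frob dm D q)"

lemma SS_Suc: "SS dm D (Suc k) = frob dm D (Suc k) + SS dm D k"
  unfolding SS_def by (simp add: add.commute)

lemma SS_nonneg: "0 \<le> SS dm D k"
  unfolding SS_def by (simp add: sum_nonneg frob_nonneg)

lemma lin_bound:
  assumes "\<forall>q\<in>{1..k}. frob dm V q \<le> R" "1 \<le> R"
  shows "L2_set (lin dm V D k z) {..<dm k} \<le> R ^ (k - 1) * SS dm D k * L2_set z {..<dm 0}"
  using assms
proof (induction k)
  case 0
  then show ?case by (simp add: L2_set_def SS_def)
next
  case (Suc k)
  have ih: "L2_set (lin dm V D k z) {..<dm k} \<le> R ^ (k - 1) * SS dm D k * L2_set z {..<dm 0}" using Suc by auto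
  have mvb: "L2_set (mv dm V k z) {..<dm k} \<le> R ^ k * L2_set z {..<dm 0}"
    using mv_bound[where k=k and dm=dm and V=V and R=R and z=z] Suc.prems by auto
  let ?z = "L2_set z {..<dm 0}"
  have "L2_set (lin dm V D (Suc k) z) {..<dm (Suc k)} \<le>
      L2_set (\<lambda>i. \<Sum>m<dm k. D (Suc k) i m * mv dm V k z m) {..<dm (Suc k)}
    + L2_set (\<lambda>i. \<Sum>m<dm k. V (Suc k) i m * lin dm V D k z m) {..<dm (Suc k)}"
    unfolding lin_Suc_fun by (rule L2_sum2)
  also have "\<dots> \<le> frob dm D (Suc k) * L2_set (mv dm V k z) {..<dm k} + frob dm V (Suc k) * L2_set (lin dm V D k z) {..<dm k}"
    by (intro add_mono matvec_frob)
  also have "\<dots> \<le> frob dm D (Suc k) * (R ^ k * ?z) + R * (R ^ (k - 1) * SS dm D k * ?z)"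
    using Suc.prems ih mvb by (intro add_mono mult_mono) (auto simp: frob_nonneg)
  also have "R * (R ^ (k - 1) * SS dm D k * ?z) \<le> R ^ k * SS dm D k * ?z"
  proof (cases k)
    case 0
    then show ?thesis by (simp add: SS_def)
  next
    case (Suc k')
    then show ?thesis by simp
  qed
  finally show ?case by (simp add: SS_Suc algebra_simps del: lin.simps)
qed

lemma quad_bound:
  assumes "\<forall>q\<in>{1..k}. frob dm V q \<le> R" "1 \<le> R"
  shows "L2_set (quad dm V D k z) {..<dm k} \<le> 2 * R ^ (k - 1) * (SS dm D k)\<^sup>2 * L2_set z {..<dm 0}"
  using assms
proof (induction k)
  case 0
  then show ?case by (simp add: L2_set_def SS_def)
next
  case (Suc k)
  have ih: "L2_set (quad dm V D k z) {..<dm k} \<le> 2 * R ^ (k - 1) * (SS dm D k)\<^sup>2 * L2_set z {..<dm 0}" using Suc by auto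
  have lb: "L2_set (lin dm V D k z) {..<dm k} \<le> R ^ (k - 1) * SS dm D k * L2_set z {..<dm 0}"
    using lin_bound[where k=k and dm=dm and V=V and R=R and D=D and z=z] Suc.prems by auto
  let ?z = "L2_set z {..<dm 0}"
  let ?S = "SS dm D k"
  let ?a = "frob dm D (Suc k)"
  have z0: "0 \<le> ?z" by simp
  have S0: "0 \<le> ?S" by (rule SS_nonneg)
  have a0: "0 \<le> ?a" by (rule frob_nonneg)
  have Rk: "R ^ (k - 1) \<le> R ^ k" using Suc.prems by (intro power_increasing) auto
  have "L2_set (quad dm V D (Suc k) z) {..<dm (Suc k)} \<le>
      L2_set (\<lambda>i. \<Sum>m<dm k. (\<lambda>i m. 2 * D (Suc k) i m) i m * lin dm V D k z m) {..<dm (Suc k)}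
    + L2_set (\<lambda>i. \<Sum>m<dm k. V (Suc k) i m * quad dm V D k z m) {..<dm (Suc k)}"
    unfolding quad_Suc_fun by (simp add: mult.assoc L2_sum2)
  also have "\<dots> \<le> frob dm (\<lambda>k i m. 2 * D k i m) (Suc k) * L2_set (lin dm V D k z) {..<dm k} + frob dm V (Suc k) * L2_set (quad dm V D k z) {..<dm k}"
    using matvec_frob[where dm=dm and k=k and V="\<lambda>k i m. 2 * D k i m"] matvec_frob[where dm=dm and k=k and V=V]
    by (intro add_mono) auto
  also have "frob dm (\<lambda>k i m. 2 * D k i m) (Suc k) = 2 * ?a"
  proof -
    have "(\<Sum>i<dm (Suc k). \<Sum>j<dm k. (2 * D (Suc k) i j)\<^sup>2) = 2\<^sup>2 * (\<Sum>i<dm (Suc k). \<Sum>j<dm k. (D (Suc k) i j)\<^sup>2)"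
      by (simp add: power_mult_distrib sum_distrib_left)
    then show ?thesis unfolding frob_def by (simp add: real_sqrt_mult)
  qed
  also have "2 * ?a * L2_set (lin dm V D k z) {..<dm k} + frob dm V (Suc k) * L2_set (quad dm V D k z) {..<dm k}
      \<le> 2 * ?a * (R ^ (k - 1) * ?S * ?z) + R * (2 * R ^ (k - 1) * ?S\<^sup>2 * ?z)"
    using Suc.prems ih lb a0 by (intro add_mono mult_mono) (auto simp: frob_nonneg)
  also have "\<dots> \<le> 2 * ?a * (R ^ k * ?S * ?z) + 2 * R ^ k * ?S\<^sup>2 * ?z"
  proof (intro add_mono)
    show "2 * ?a * (R ^ (k - 1) * ?S * ?z) \<le> 2 * ?a * (R ^ k * ?S * ?z)"
      using Rk a0 S0 z0 by (intro mult_left_mono mult_right_mono) auto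
    show "R * (2 * R ^ (k - 1) * ?S\<^sup>2 * ?z) \<le> 2 * R ^ k * ?S\<^sup>2 * ?z"
    proof (cases k)
      case 0
      then show ?thesis by (simp add: SS_def)
    next
      case (Suc k')
      then show ?thesis by simp
    qed
  qed
  also have "\<dots> \<le> 2 * R ^ k * (?a + ?S)\<^sup>2 * ?z"
  proof -
    have "?a * ?S + ?S\<^sup>2 \<le> (?a + ?S)\<^sup>2" using a0 S0 by (simp add: power2_eq_square algebra_simps)
    then have "2 * R ^ k * ?z * (?a * ?S + ?S\<^sup>2) \<le> 2 * R ^ k * ?z * (?a + ?S)\<^sup>2"
      using Suc.prems z0 by (intro mult_left_mono) auto
    then show ?thesis by (simp add: algebra_simps)
  qed
  finally show ?case by (simp add: SS_Suc del: quad.simps)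
qed

lemma lip_deriv:
  fixes f f' :: "real \<Rightarrow> real"
  assumes "a \<le> b" "\<And>x. a \<le> x \<Longrightarrow> x \<le> b \<Longrightarrow> (f has_real_derivative f' x) (at x)"
    "\<And>x. a \<le> x \<Longrightarrow> x \<le> b \<Longrightarrow> \<bar>f' x\<bar> \<le> C"
  shows "\<bar>f b - f a\<bar> \<le> C * (b - a)"
proof -
  have 1: "(\<lambda>x. C * x - f x) a \<le> (\<lambda>x. C * x - f x) b"
    apply (rule DERIV_nonneg_imp_nondecreasing[OF assms(1)])
    subgoal for x using assms(2,3)[of x] by (auto intro!: derivative_eq_intros exI[of _ "C - f' x"])
    done
  have 2: "(\<lambda>x. C * x + f x) a \<le> (\<lambda>x. C * x + f x) b"
    apply (rule DERIV_nonneg_imp_nondecreasing[OF assms(1)])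
    subgoal for x using assms(2,3)[of x] by (auto intro!: derivative_eq_intros exI[of _ "C + f' x"])
    done
  show ?thesis using 1 2 by (simp add: algebra_simps abs_le_iff)
qed

lemma descent1D:
  fixes f f' :: "real \<Rightarrow> real"
  assumes "\<And>x. (f has_real_derivative f' x) (at x)"
    "\<And>x. 0 \<le> x \<Longrightarrow> x \<le> 1 \<Longrightarrow> f' x - f' 0 \<le> M * x"
  shows "f 1 \<le> f 0 + f' 0 + M / 2"
proof -
  have "(\<lambda>x. f x - f' 0 * x - M / 2 * x\<^sup>2) 0 \<ge> (\<lambda>x. f x - f' 0 * x - M / 2 * x\<^sup>2) 1"
    apply (rule DERIV_nonpos_imp_nonincreasing[of 0 1])
     apply simp
    subgoal for x using assms(1)[of x] assms(2)[of x]
      by (auto intro!: derivative_eq_intros exI[of _ "f' x - f' 0 - M * x"])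
    done
  then show ?thesis by simp
qed

lemma abs_le_L2: "finite A \<Longrightarrow> i \<in> A \<Longrightarrow> \<bar>f i\<bar> \<le> L2_set f A"
  using member_le_L2_set[of A i "\<lambda>i. \<bar>f i\<bar>"] by (simp add: L2_set_def)

lemma descent_step:
  assumes dmL: "0 < dm L"
    and der: "\<forall>t. (l has_real_derivative dl t) (at t)"
    and lip: "\<forall>a b. \<bar>dl a - dl b\<bar> \<le> \<beta> * \<bar>a - b\<bar>"
    and bnd: "\<forall>t. \<bar>dl t\<bar> \<le> G"
    and R1: "1 \<le> R"
    and zn: "\<forall>i<n. L2_set (z i) {..<dm 0} \<le> 1"
    and seg: "\<forall>s. 0 \<le> s \<longrightarrow> s \<le> 1 \<longrightarrow> (\<forall>q\<in>{1..L}. frob dm (aff W D s) q \<le> R)"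
  shows "risk l n z dm L (aff W D 1) \<le> risk l n z dm L (aff W D 0)
     + (1 / real n) * (\<Sum>i<n. dl (mv dm (aff W D 0) L (z i) 0) * lin dm (aff W D 0) D L (z i) 0)
     + (\<beta> + G) * R ^ (2 * (L - 1)) * (SS dm D L)\<^sup>2"
proof -
  have G0: "0 \<le> G" using bnd[rule_format, of 0] by simp
  have b0: "0 \<le> \<beta>" using lip[rule_format, of 1 0] by simp
  define S where "S = SS dm D L"
  have S0: "0 \<le> S" unfolding S_def by (rule SS_nonneg)
  define C1 where "C1 = R ^ (L - 1) * S"
  define M2 where "M2 = 2 * R ^ (L - 1) * S\<^sup>2"
  have C10: "0 \<le> C1" unfolding C1_def using S0 R1 by simp
  have M20: "0 \<le> M2" unfolding M2_def using R1 by simp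
  define g where "g i s = mv dm (aff W D s) L (z i) 0" for i s
  define g' where "g' i s = lin dm (aff W D s) D L (z i) 0" for i s
  define g'' where "g'' i s = quad dm (aff W D s) D L (z i) 0" for i s
  have dg: "(g i has_real_derivative g' i s) (at s)" for i s
    unfolding g_def g'_def by (rule d_mv)
  have dg': "(g' i has_real_derivative g'' i s) (at s)" for i s
    unfolding g''_def g'_def by (rule d_lin)
  have bg': "\<bar>g' i s\<bar> \<le> C1" if "i < n" "0 \<le> s" "s \<le> 1" for i s
  proof -
    have "\<bar>g' i s\<bar> \<le> L2_set (lin dm (aff W D s) D L (z i)) {..<dm L}"
      unfolding g'_def using dmL by (intro abs_le_L2) auto
    also have "\<dots> \<le> R ^ (L - 1) * SS dm D L * L2_set (z i) {..<dm 0}"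
      using seg that R1 by (intro lin_bound) auto
    also have "\<dots> \<le> C1 * 1" unfolding C1_def S_def
      using zn that C10[unfolded C1_def S_def] by (intro mult_left_mono) auto
    finally show ?thesis by simp
  qed
  have bg'': "\<bar>g'' i s\<bar> \<le> M2" if "i < n" "0 \<le> s" "s \<le> 1" for i s
  proof -
    have "\<bar>g'' i s\<bar> \<le> L2_set (quad dm (aff W D s) D L (z i)) {..<dm L}"
      unfolding g''_def using dmL by (intro abs_le_L2) auto
    also have "\<dots> \<le> 2 * R ^ (L - 1) * (SS dm D L)\<^sup>2 * L2_set (z i) {..<dm 0}"
      using seg that R1 by (intro quad_bound) auto
    also have "\<dots> \<le> M2 * 1" unfolding M2_def S_def
      using zn that M20[unfolded M2_def S_def] by (intro mult_left_mono) auto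
    finally show ?thesis by simp
  qed
  have key: "\<bar>dl (g i s) * g' i s - dl (g i 0) * g' i 0\<bar> \<le> (\<beta> * C1\<^sup>2 + G * M2) * s"
    if "i < n" "0 \<le> s" "s \<le> 1" for i s
  proof -
    have a: "\<bar>g i s - g i 0\<bar> \<le> C1 * (s - 0)"
      using that by (intro lip_deriv[where f'="g' i"] dg bg') auto
    have b: "\<bar>g' i s - g' i 0\<bar> \<le> M2 * (s - 0)"
      using that by (intro lip_deriv[where f'="g'' i"] dg' bg'') auto
    have "dl (g i s) * g' i s - dl (g i 0) * g' i 0 = (dl (g i s) - dl (g i 0)) * g' i s + dl (g i 0) * (g' i s - g' i 0)"
      by (simp add: algebra_simps)
    then have "\<bar>dl (g i s) * g' i s - dl (g i 0) * g' i 0\<bar> \<le> \<bar>dl (g i s) - dl (g i 0)\<bar> * \<bar>g' i s\<bar> + \<bar>dl (g i 0)\<bar> * \<bar>g' i s - g' i 0\<bar>"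
      by (metis abs_mult abs_triangle_ineq)
    also have "\<dots> \<le> (\<beta> * (C1 * s)) * C1 + G * (M2 * s)"
    proof (intro add_mono mult_mono)
      show "\<bar>dl (g i s) - dl (g i 0)\<bar> \<le> \<beta> * (C1 * s)"
        using lip[rule_format, of "g i s" "g i 0"] a b0 by (smt (verit) mult_left_mono)
    qed (use bg' that b G0 b0 C10 bnd in auto)
    finally show ?thesis by (simp add: algebra_simps power2_eq_square)
  qed
  define B where "B = \<beta> * C1\<^sup>2 + G * M2"
  have B0: "0 \<le> B" unfolding B_def using b0 G0 M20 by simp
  define f where "f s = risk l n z dm L (aff W D s)" for s
  define f' where "f' s = (1 / real n) * (\<Sum>i<n. dl (g i s) * g' i s)" for s
  have df: "(f has_real_derivative f' x) (at x)" for x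
    unfolding f_def f'_def g_def g'_def by (rule d_risk[where dm=dm and L=L and l=l and dl=dl, OF dmL der])
  have fd: "f' s - f' 0 \<le> B * s" if "0 \<le> s" "s \<le> 1" for s
  proof (cases "n = 0")
    case True
    then show ?thesis unfolding f'_def using B0 that by simp
  next
    case False
    have "f' s - f' 0 = (1 / real n) * (\<Sum>i<n. dl (g i s) * g' i s - dl (g i 0) * g' i 0)"
      unfolding f'_def by (simp add: sum_subtractf algebra_simps)
    also have "\<dots> \<le> (1 / real n) * (\<Sum>i<n. B * s)"
      using key that unfolding B_def
      by (intro mult_left_mono sum_mono) (auto simp: abs_le_iff)
    also have "\<dots> = B * s" using False by simp
    finally show ?thesis .
  qed
  have "f 1 \<le> f 0 + f' 0 + B / 2" by (rule descent1D[OF df fd])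
  moreover have "B / 2 \<le> (\<beta> + G) * R ^ (2 * (L - 1)) * S\<^sup>2"
  proof -
    have e: "C1\<^sup>2 = R ^ (2 * (L - 1)) * S\<^sup>2" unfolding C1_def by (simp add: power_mult_distrib power_mult[symmetric] mult.commute[of 2])
    have r: "R ^ (L - 1) \<le> R ^ (2 * (L - 1))" using R1 by (intro power_increasing) auto
    have "G * M2 / 2 \<le> G * (R ^ (2 * (L - 1)) * S\<^sup>2)"
      unfolding M2_def using G0 r by (simp add: mult_left_mono mult_right_mono)
    moreover have "0 \<le> \<beta> * (R ^ (2 * (L - 1)) * S\<^sup>2)" using b0 R1 by simp
    moreover have "B / 2 = \<beta> * (R ^ (2 * (L - 1)) * S\<^sup>2) / 2 + G * M2 / 2" by (simp add: B_def e add_divide_distrib)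
    moreover have "(\<beta> + G) * R ^ (2 * (L - 1)) * S\<^sup>2 = \<beta> * (R ^ (2 * (L - 1)) * S\<^sup>2) + G * (R ^ (2 * (L - 1)) * S\<^sup>2)"
      by (simp add: algebra_simps)
    ultimately show ?thesis by linarith
  qed
  ultimately show ?thesis unfolding f_def f'_def g_def g'_def S_def by simp
qed

primrec mv1 :: "(nat\<Rightarrow>nat) \<Rightarrow> network \<Rightarrow> nat \<Rightarrow> (nat\<Rightarrow>real) \<Rightarrow> nat \<Rightarrow> real" where
  "mv1 dm W 0 x i = x i"
| "mv1 dm W (Suc k) x i = (if k = 0 then x i else (\<Sum>m<dm k. W (Suc k) i m * mv1 dm W k x m))"

definition ee :: "nat \<Rightarrow> nat \<Rightarrow> real" where "ee a = (\<lambda>m. if m = a then 1 else 0)"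

lemma lin_ev1:
  assumes "1 \<le> k" "b < dm 0"
  shows "lin dm W (ev (1, a, b)) k z i = z b * mv1 dm W k (ee a) i"
  using assms
proof (induction k arbitrary: i)
  case 0
  then show ?case by simp
next
  case (Suc k)
  show ?case
  proof (cases "k = 0")
    case True
    have "(\<Sum>m<dm 0. ev (1, a, b) 1 i m * z m) = (\<Sum>m<dm 0. if m = b then (if i = a then z b else 0) else 0)"
      by (rule sum.cong) (auto simp: ev_def)
    also have "\<dots> = (if i = a then z b else 0)" using Suc.prems by simp
    finally show ?thesis using True by (simp add: ee_def)
  next
    case False
    have "lin dm W (ev (1, a, b)) (Suc k) z i = (\<Sum>m<dm k. W (Suc k) i m * (z b * mv1 dm W k (ee a) m))"
      using False Suc by (simp add: ev_def)
    then show ?thesis using False by (simp add: sum_distrib_left algebra_simps)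
  qed
qed

lemma mv_split: "1 \<le> k \<Longrightarrow> mv dm W k z i = mv1 dm W k (mv dm W 1 z) i"
proof (induction k arbitrary: i)
  case 0
  then show ?case by simp
next
  case (Suc k)
  then show ?case by (cases "k = 0") auto
qed

lemma mv1_lin: "1 \<le> k \<Longrightarrow> i < dm k \<Longrightarrow> mv1 dm W k x i = (\<Sum>a<dm 1. x a * mv1 dm W k (ee a) i)"
proof (induction k arbitrary: i)
  case 0
  then show ?case by simp
next
  case (Suc k)
  show ?case
  proof (cases "k = 0")
    case True
    have "(\<Sum>a<dm 1. x a * (if i = a then 1 else 0)) = x i"
      using Suc.prems True by (simp add: mult.commute[of "x _"] if_distrib cong: if_cong)
    then show ?thesis using True by (simp add: ee_def)
  next
    case False
    have "mv1 dm W (Suc k) x i = (\<Sum>m<dm k. W (Suc k) i m * (\<Sum>a<dm 1. x a * mv1 dm W k (ee a) m))"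
      using False Suc by simp
    also have "\<dots> = (\<Sum>a<dm 1. x a * mv1 dm W (Suc k) (ee a) i)"
      using False by (simp add: sum_distrib_left sum_distrib_right algebra_simps sum.swap[of _ "{..<dm k}"])
    finally show ?thesis .
  qed
qed

lemma sum_single_times: "(\<Sum>p\<in>{c} \<times> X. (F p::real)) = (\<Sum>x\<in>X. F (c, x))"
proof -
  have "{c} \<times> X = Pair c ` X" by auto
  then show ?thesis by (simp add: sum.reindex inj_on_def)
qed

lemma CS_abs: "\<bar>\<Sum>i\<in>A. f i * g i\<bar> \<le> L2_set f A * L2_set g A"
  by (rule order_trans[OF sum_abs]) (simp add: abs_mult L2_set_mult_ineq)

definition Gd :: "(real \<Rightarrow> real) \<Rightarrow> nat \<Rightarrow> (nat \<Rightarrow> nat \<Rightarrow> real) \<Rightarrow> (nat\<Rightarrow>nat) \<Rightarrow> nat \<Rightarrow> network \<Rightarrow> nat \<times> nat \<times> nat \<Rightarrow> real" where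
  "Gd dl n z dm L W p = (1 / real n) * (\<Sum>r<n. dl (mv dm W L (z r) 0) * lin dm W (ev p) L (z r) 0)"

lemma grad_lower:
  assumes L1: "1 \<le> L" and dmL: "0 < dm L"
    and Wb: "\<forall>q\<in>{1..L}. frob dm W q \<le> R" and R1: "1 \<le> R"
    and n0: "0 < n"
    and zn: "\<forall>i<n. L2_set (z i) {..<dm 0} \<le> 1"
    and marg: "\<exists>r<n. m0 \<le> mv dm W L (z r) 0" and m00: "0 < m0"
    and dlneg: "\<forall>r<n. dl (mv dm W L (z r) 0) \<le> - c0" and c00: "0 < c0"
    and sep: "\<forall>r<n. \<gamma> \<le> (\<Sum>j<dm 0. u j * z r j)" and g0: "0 < \<gamma>"
    and un: "L2_set u {..<dm 0} \<le> Uu"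
  shows "(m0 / R)\<^sup>2 * (c0 * \<gamma> / Uu)\<^sup>2 \<le> (\<Sum>p\<in>PP dm L. (Gd dl n z dm L W p)\<^sup>2)"
proof -
  define U where "U a = mv1 dm W L (ee a) 0" for a
  define v where "v b = (1 / real n) * (\<Sum>r<n. dl (mv dm W L (z r) 0) * z r b)" for b
  define Q where "Q = {1::nat} \<times> ({..<dm 1} \<times> {..<dm 0})"
  have QP: "Q \<subseteq> PP dm L" unfolding Q_def PP_def using L1 by auto
  have Gd1: "Gd dl n z dm L W (1, a, b) = U a * v b" if "b < dm 0" for a b
    unfolding Gd_def U_def v_def using lin_ev1[where dm=dm, OF L1 that]
    by (simp add: sum_distrib_left sum_distrib_right algebra_simps)
  have "(\<Sum>p\<in>Q. (Gd dl n z dm L W p)\<^sup>2) = (\<Sum>a<dm 1. \<Sum>b<dm 0. (U a * v b)\<^sup>2)"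
    unfolding Q_def sum_single_times sum.cartesian_product by (rule sum.cong) (auto simp: Gd1[simplified])
  also have "\<dots> = (L2_set U {..<dm 1})\<^sup>2 * (L2_set v {..<dm 0})\<^sup>2"
    by (simp add: L2_set_def sum_nonneg power_mult_distrib sum_product)
  finally have Qeq: "(\<Sum>p\<in>Q. (Gd dl n z dm L W p)\<^sup>2) = (L2_set U {..<dm 1})\<^sup>2 * (L2_set v {..<dm 0})\<^sup>2" .
  have Qle: "(\<Sum>p\<in>Q. (Gd dl n z dm L W p)\<^sup>2) \<le> (\<Sum>p\<in>PP dm L. (Gd dl n z dm L W p)\<^sup>2)"
    by (rule sum_mono2[OF finite_PP QP]) auto
  obtain r where r: "r < n" "m0 \<le> mv dm W L (z r) 0" using marg by auto
  have "mv dm W L (z r) 0 = (\<Sum>a<dm 1. mv dm W 1 (z r) a * U a)"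
    unfolding U_def mv_split[where dm=dm, OF L1] by (rule mv1_lin[where dm=dm and k=L, OF L1 dmL])
  then have "m0 \<le> L2_set (mv dm W 1 (z r)) {..<dm 1} * L2_set U {..<dm 1}"
    using r CS_abs[of "mv dm W 1 (z r)" U "{..<dm 1}"] by linarith
  also have "\<dots> \<le> (R * 1) * L2_set U {..<dm 1}"
  proof (intro mult_right_mono)
    have "L2_set (mv dm W 1 (z r)) {..<dm 1} \<le> R ^ 1 * L2_set (z r) {..<dm 0}"
      using Wb L1 R1 by (intro mv_bound) auto
    also have "\<dots> \<le> R * 1" using zn r R1 by simp
    finally show "L2_set (mv dm W 1 (z r)) {..<dm 1} \<le> R * 1" .
  qed simp
  finally have Ub: "m0 / R \<le> L2_set U {..<dm 1}" using R1 by (simp add: divide_le_eq mult.commute)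
  have "(\<Sum>b<dm 0. v b * u b) = (1 / real n) * (\<Sum>r<n. dl (mv dm W L (z r) 0) * (\<Sum>j<dm 0. u j * z r j))"
    unfolding v_def by (simp add: sum_distrib_left sum_distrib_right algebra_simps sum.swap[of _ "{..<dm 0}"])
  also have "\<dots> \<le> (1 / real n) * (\<Sum>r<n. - c0 * \<gamma>)"
  proof (intro mult_left_mono sum_mono)
    fix r assume "r \<in> {..<n}"
    then have a: "dl (mv dm W L (z r) 0) \<le> - c0" and b: "\<gamma> \<le> (\<Sum>j<dm 0. u j * z r j)"
      using dlneg sep by auto
    have "dl (mv dm W L (z r) 0) * (\<Sum>j<dm 0. u j * z r j) \<le> - c0 * (\<Sum>j<dm 0. u j * z r j)"
      using a b g0 by (intro mult_right_mono) auto
    also have "\<dots> \<le> - c0 * \<gamma>" using b c00 by simp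
    finally show "dl (mv dm W L (z r) 0) * (\<Sum>j<dm 0. u j * z r j) \<le> - c0 * \<gamma>" .
  qed simp
  also have "\<dots> = - c0 * \<gamma>" using n0 by simp
  finally have "c0 * \<gamma> \<le> \<bar>\<Sum>b<dm 0. v b * u b\<bar>" by linarith
  also have "\<dots> \<le> L2_set v {..<dm 0} * L2_set u {..<dm 0}" by (rule CS_abs)
  also have "\<dots> \<le> L2_set v {..<dm 0} * Uu" using un by (intro mult_left_mono) auto
  finally have cg: "c0 * \<gamma> \<le> L2_set v {..<dm 0} * Uu" .
  have "0 \<le> Uu" using un L2_set_nonneg[of u "{..<dm 0}"] by linarith
  moreover have "Uu \<noteq> 0" using cg mult_pos_pos[OF c00 g0] by auto
  ultimately have Uu0: "0 < Uu" by simp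
  have vb: "c0 * \<gamma> / Uu \<le> L2_set v {..<dm 0}" using cg Uu0 by (simp add: divide_le_eq)
  have "(m0 / R)\<^sup>2 * (c0 * \<gamma> / Uu)\<^sup>2 \<le> (L2_set U {..<dm 1})\<^sup>2 * (L2_set v {..<dm 0})\<^sup>2"
    using Ub vb m00 R1 c00 g0 Uu0 by (intro mult_mono power_mono) auto
  then show ?thesis using Qeq Qle by linarith
qed



lemma frob_L2: "frob dm V k = L2_set (\<lambda>(i, j). V k i j) ({..<dm k} \<times> {..<dm (k - 1)})"
  unfolding frob_def L2_set_def by (simp add: sum.cartesian_product case_prod_beta)

lemma frob_convex:
  assumes "0 \<le> s" "s \<le> 1"
  shows "frob dm (\<lambda>k i j. (1 - s) * A k i j + s * B k i j) q \<le> (1 - s) * frob dm A q + s * frob dm B q"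
proof -
  let ?I = "{..<dm q} \<times> {..<dm (q - 1)}"
  have "frob dm (\<lambda>k i j. (1 - s) * A k i j + s * B k i j) q
      = L2_set (\<lambda>p. (\<lambda>p. (1 - s) * (case p of (i, j) \<Rightarrow> A q i j)) p + (\<lambda>p. s * (case p of (i, j) \<Rightarrow> B q i j)) p) ?I"
    unfolding frob_L2 by (rule L2_set_cong) auto
  also have "\<dots> \<le> L2_set (\<lambda>p. (1 - s) * (case p of (i, j) \<Rightarrow> A q i j)) ?I + L2_set (\<lambda>p. s * (case p of (i, j) \<Rightarrow> B q i j)) ?I"
    by (rule L2_set_triangle_ineq)
  also have "\<dots> = (1 - s) * frob dm A q + s * frob dm B q"
    unfolding frob_L2 using assms by (simp add: L2_set_right_distrib)
  finally show ?thesis .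
qed

lemma sq_sum_card:
  fixes a :: "'a \<Rightarrow> real"
  assumes "finite A"
  shows "(\<Sum>q\<in>A. a q)\<^sup>2 \<le> real (card A) * (\<Sum>q\<in>A. (a q)\<^sup>2)"
proof -
  have cs: "\<bar>\<Sum>q\<in>A. a q * 1\<bar> \<le> L2_set a A * L2_set (\<lambda>_. 1) A" by (rule CS_abs)
  then have "(\<Sum>q\<in>A. a q)\<^sup>2 \<le> (L2_set a A * L2_set (\<lambda>_. 1) A)\<^sup>2"
    using power_mono[OF cs abs_ge_zero, of 2] by simp
  also have "\<dots> = (\<Sum>q\<in>A. (a q)\<^sup>2) * real (card A)"
    by (simp add: power_mult_distrib L2_set_def sum_nonneg)
  finally show ?thesis by (simp add: mult.commute)
qed

lemma frob_sq_sum: "(\<Sum>q\<in>{1..L}. (frob dm D q)\<^sup>2) = (\<Sum>p\<in>PP dm L. (D (fst p) (fst (snd p)) (snd (snd p)))\<^sup>2)"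
proof -
  have "(\<Sum>q\<in>{1..L}. (frob dm D q)\<^sup>2) = (\<Sum>q\<in>{1..L}. \<Sum>i<dm q. \<Sum>j<dm (q - 1). (D q i j)\<^sup>2)"
    unfolding frob_def by (simp add: sum_nonneg)
  also have "\<dots> = (\<Sum>q\<in>{1..L}. \<Sum>p\<in>{..<dm q} \<times> {..<dm (q - 1)}. (D q (fst p) (snd p))\<^sup>2)"
    by (rule sum.cong[OF refl]) (simp add: sum.cartesian_product case_prod_beta)
  also have "\<dots> = (\<Sum>p\<in>PP dm L. (D (fst p) (fst (snd p)) (snd (snd p)))\<^sup>2)"
    unfolding PP_def by (subst sum.Sigma) (auto simp: case_prod_beta)
  finally show ?thesis .
qed

lemma l_decr:
  assumes "\<forall>t. (l has_real_derivative dl t) (at t)" "\<forall>t. dl t < 0" "x \<le> y"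
  shows "l y \<le> l x"
  using assms by (intro DERIV_nonpos_imp_nonincreasing[of x y l]) (auto intro: less_imp_le)

lemma l_nonneg:
  assumes "\<forall>t. (l has_real_derivative dl t) (at t)" "\<forall>t. dl t < 0" "(l \<longlongrightarrow> 0) at_top"
  shows "0 \<le> l x"
proof (rule tendsto_upperbound[OF assms(3)])
  show "\<forall>\<^sub>F y in at_top. l y \<le> l x"
    using eventually_ge_at_top[of x] by eventually_elim (rule l_decr[OF assms(1,2)])
qed simp

theorem mainTheorem9:
  fixes l dl :: "real \<Rightarrow> real"
    and n d L :: nat
    and dm :: "nat \<Rightarrow> nat"
    and x :: "nat \<Rightarrow> nat \<Rightarrow> real"
    and y :: "nat \<Rightarrow> real"
    and \<beta> G R :: real
    and Wt :: "nat \<Rightarrow> network"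
  assumes L_pos: "L \<ge> 1"
    and dims: "dm 0 = d" "dm L = 1" "\<forall>k\<le>L. dm k \<ge> 1"
    and labels: "\<forall>i<n. y i = 1 \<or> y i = -1"
    and x_norm: "\<forall>i<n. sqrt (\<Sum>j<d. (x i j)\<^sup>2) \<le> 1"
    and separable: "\<exists>u :: nat \<Rightarrow> real. \<forall>i<n. (\<Sum>j<d. u j * (y i * x i j)) > 0"
    \<comment> \<open>Assumption 1\<close>
    and A1_deriv: "\<forall>t. (l has_real_derivative dl t) (at t)"
    and A1_cont: "continuous_on UNIV dl"
    and A1_neg: "\<forall>t. dl t < 0"
    and A1_bot: "filterlim l at_top at_bot"
    and A1_top: "(l \<longlongrightarrow> 0) at_top"
    \<comment> \<open>Assumption 4\<close>
    and A4_lip: "\<forall>a b. \<bar>dl a - dl b\<bar> \<le> \<beta> * \<bar>a - b\<bar>"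
    and A4_bnd: "\<forall>t. \<bar>dl t\<bar> \<le> G"
    \<comment> \<open>Assumption 2\<close>
    and A2_grad: "\<exists>k\<in>{1..L}. \<exists>i<dm k. \<exists>j<dm (k - 1).
                    grad_entry (risk l n (\<lambda>i j. y i * x i j) dm L) (Wt 0) k i j \<noteq> 0"
    and A2_risk: "risk l n (\<lambda>i j. y i * x i j) dm L (Wt 0) \<le> l 0"
    \<comment> \<open>R \<ge> 1 and gradient descent with step size 1 / beta(R)\<close>
    and R_ge: "R \<ge> 1"
    and GD: "\<forall>t. \<forall>k\<in>{1..L}. \<forall>i<dm k. \<forall>j<dm (k - 1).
               Wt (Suc t) k i j = Wt t k i j - (1 / betaR L R \<beta> G) *
                 grad_entry (risk l n (\<lambda>i j. y i * x i j) dm L) (Wt t) k i j"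
  shows "\<exists>t. \<exists>k\<in>{1..L}. frob dm (Wt t) k > R"
proof (rule ccontr)
  assume "\<not> ?thesis"
  then have Wb: "\<forall>t. \<forall>q\<in>{1..L}. frob dm (Wt t) q \<le> R" by (auto simp: not_less)
  define z where "z = (\<lambda>i j. y i * x i j)"
  define Rk where "Rk = risk l n z dm L"
  have dmL: "0 < dm L" using dims by simp
  have zn: "\<forall>i<n. L2_set (z i) {..<dm 0} \<le> 1"
  proof (intro allI impI)
    fix i assume i: "i < n"
    have "(\<Sum>j<d. (z i j)\<^sup>2) = (\<Sum>j<d. (x i j)\<^sup>2)"
      using labels i unfolding z_def by (auto simp: power_mult_distrib)
    then show "L2_set (z i) {..<dm 0} \<le> 1" using x_norm i dims(1) unfolding L2_set_def by simp
  qed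
  have G0: "0 < G" using A4_bnd[rule_format, of 0] A1_neg[rule_format, of 0] by linarith
  have b0: "0 \<le> \<beta>" using A4_lip[rule_format, of 1 0] by simp
  define K where "K = (\<beta> + G) * R ^ (2 * (L - 1))"
  have K0: "0 < K" unfolding K_def using G0 b0 R_ge by simp
  define B where "B = betaR L R \<beta> G"
  have LL: "2 * L - 2 = 2 * (L - 1)" by simp
  have B_eq: "B = 2 * (real L)\<^sup>2 * K" unfolding B_def betaR_def K_def LL by simp
  have Lr: "1 \<le> real L" using L_pos by simp
  have Bpos: "0 < B" unfolding B_eq using K0 Lr by simp
  define eta where "eta = 1 / B"
  have eta0: "0 < eta" unfolding eta_def using Bpos by simp
  have grad: "grad_entry Rk W k i j = Gd dl n z dm L W (k, i, j)" for W k i j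
    unfolding Rk_def Gd_def by (rule grad_formula[where dm=dm and L=L, OF dmL A1_deriv])
  define N where "N t = (\<Sum>p\<in>PP dm L. (Gd dl n z dm L (Wt t) p)\<^sup>2)" for t
  define Phi where "Phi t = Rk (Wt t)" for t
  have N0: "0 \<le> N t" for t unfolding N_def by (simp add: sum_nonneg)
  have desc: "Phi (Suc t) \<le> Phi t - eta / 2 * N t" for t
  proof -
    define D where "D = (\<lambda>k i j. Wt (Suc t) k i j - Wt t k i j)"
    have a0: "aff (Wt t) D 0 = Wt t" unfolding aff_def by (simp add: fun_eq_iff)
    have a1: "aff (Wt t) D 1 = Wt (Suc t)" unfolding aff_def D_def by (simp add: fun_eq_iff)
    have seg: "\<forall>s::real. 0 \<le> s \<longrightarrow> s \<le> 1 \<longrightarrow> (\<forall>q\<in>{1..L}. frob dm (aff (Wt t) D s) q \<le> R)"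
    proof (intro allI impI ballI)
      fix s :: real and q assume s: "0 \<le> s" "s \<le> 1" and q: "q \<in> {1..L}"
      have "aff (Wt t) D s = (\<lambda>k i j. (1 - s) * Wt t k i j + s * Wt (Suc t) k i j)"
        unfolding aff_def D_def by (simp add: fun_eq_iff algebra_simps)
      then have "frob dm (aff (Wt t) D s) q \<le> (1 - s) * frob dm (Wt t) q + s * frob dm (Wt (Suc t)) q"
        using frob_convex[OF s] by simp
      also have "\<dots> \<le> (1 - s) * R + s * R" using Wb q s by (intro add_mono mult_left_mono) auto
      finally show "frob dm (aff (Wt t) D s) q \<le> R" by (simp add: algebra_simps)
    qed
    have step: "Rk (Wt (Suc t)) \<le> Rk (Wt t)
     + (1 / real n) * (\<Sum>i<n. dl (mv dm (Wt t) L (z i) 0) * lin dm (Wt t) D L (z i) 0)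
     + (\<beta> + G) * R ^ (2 * (L - 1)) * (SS dm D L)\<^sup>2"
      using descent_step[where dm=dm and L=L and l=l and dl=dl, OF dmL A1_deriv A4_lip A4_bnd R_ge zn seg]
      unfolding a0 a1 Rk_def .
    have Dp: "D (fst p) (fst (snd p)) (snd (snd p)) = - eta * Gd dl n z dm L (Wt t) p" if "p \<in> PP dm L" for p
    proof -
      obtain k i j where p: "p = (k, i, j)" by (cases p) auto
      have "k \<in> {1..L}" "i < dm k" "j < dm (k - 1)" using that p unfolding PP_def by auto
      then have "Wt (Suc t) k i j = Wt t k i j - (1 / B) * grad_entry Rk (Wt t) k i j"
        using spec[OF GD, of t] unfolding B_def Rk_def z_def by simp
      then show ?thesis unfolding D_def p eta_def grad by simp
    qed
    have "(1 / real n) * (\<Sum>r<n. dl (mv dm (Wt t) L (z r) 0) * lin dm (Wt t) D L (z r) 0)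
        = (\<Sum>p\<in>PP dm L. D (fst p) (fst (snd p)) (snd (snd p)) * Gd dl n z dm L (Wt t) p)"
      unfolding Gd_def lin_decomp[where dm=dm and D=D and W="Wt t", OF dmL] sum_distrib_left
      by (subst sum.swap) (simp add: algebra_simps)
    also have "\<dots> = (\<Sum>p\<in>PP dm L. - eta * (Gd dl n z dm L (Wt t) p)\<^sup>2)"
      by (rule sum.cong) (auto simp: Dp power2_eq_square)
    also have "\<dots> = - eta * N t" unfolding N_def by (simp add: sum_distrib_left)
    finally have lin0: "(1 / real n) * (\<Sum>r<n. dl (mv dm (Wt t) L (z r) 0) * lin dm (Wt t) D L (z r) 0) = - eta * N t" .
    have "(SS dm D L)\<^sup>2 \<le> real (card {1..L}) * (\<Sum>q\<in>{1..L}. (frob dm D q)\<^sup>2)"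
      unfolding SS_def by (rule sq_sum_card) simp
    also have "\<dots> = real L * (\<Sum>p\<in>PP dm L. (- eta * Gd dl n z dm L (Wt t) p)\<^sup>2)"
      unfolding frob_sq_sum by (simp add: Dp cong: sum.cong)
    also have "\<dots> = real L * eta\<^sup>2 * N t" unfolding N_def by (simp add: power_mult_distrib sum_distrib_left mult.assoc)
    finally have SSb: "(SS dm D L)\<^sup>2 \<le> real L * eta\<^sup>2 * N t" .
    have "(\<beta> + G) * R ^ (2 * (L - 1)) * (SS dm D L)\<^sup>2 \<le> K * (real L * eta\<^sup>2 * N t)"
      unfolding K_def[symmetric] using SSb K0 by (intro mult_left_mono) auto
    also have "\<dots> = eta * N t / (2 * real L)"
      unfolding eta_def B_eq using K0 Lr by (simp add: field_simps power2_eq_square)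
    also have "\<dots> \<le> eta * N t / 2"
      using Lr eta0 N0[of t] by (intro divide_left_mono) auto
    finally have ex: "(\<beta> + G) * R ^ (2 * (L - 1)) * (SS dm D L)\<^sup>2 \<le> eta * N t / 2" .
    show ?thesis using step lin0 ex unfolding Phi_def by simp
  qed
  have l0: "0 \<le> l v" for v by (rule l_nonneg[OF A1_deriv A1_neg A1_top])
  have Phi_eq: "Phi t = (1 / real n) * (\<Sum>r<n. l (mv dm (Wt t) L (z r) 0))" for t
    unfolding Phi_def Rk_def by (rule risk_mv[where dm=dm and L=L, OF dmL])
  have Phi0: "0 \<le> Phi t" for t unfolding Phi_eq by (simp add: sum_nonneg l0)
  obtain k0 i0 j0 where kij: "k0 \<in> {1..L}" "i0 < dm k0" "j0 < dm (k0 - 1)"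
      "grad_entry Rk (Wt 0) k0 i0 j0 \<noteq> 0"
    using A2_grad unfolding Rk_def z_def by blast
  then have gk: "Gd dl n z dm L (Wt 0) (k0, i0, j0) \<noteq> 0" using grad by simp
  have n0: "0 < n" using gk unfolding Gd_def by (cases n) auto
  have "(Gd dl n z dm L (Wt 0) (k0, i0, j0))\<^sup>2 \<le> N 0"
    unfolding N_def by (rule member_le_sum) (use kij finite_PP in \<open>auto simp: PP_def\<close>)
  moreover have "0 < (Gd dl n z dm L (Wt 0) (k0, i0, j0))\<^sup>2" using gk by simp
  ultimately have N0pos: "0 < N 0" by linarith
  have "0 < eta / 2 * N 0" using eta0 N0pos by simp
  then have Phi1: "Phi 1 < Phi 0" using desc[of 0] by simp
  define \<delta> where "\<delta> = l 0 - Phi 1"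
  have d0: "0 < \<delta>" using Phi1 A2_risk unfolding \<delta>_def Phi_def Rk_def z_def by simp
  have mono: "Phi t \<le> Phi 1" if "1 \<le> t" for t
    using that
  proof (induction t rule: dec_induct)
    case base
    then show ?case by simp
  next
    case (step m)
    have "0 \<le> eta / 2 * N m" using eta0 N0[of m] by simp
    then show ?case using desc[of m] step by simp
  qed
  have gb: "\<bar>mv dm (Wt t) L (z r) 0\<bar> \<le> R ^ L" if "r < n" for t r
  proof -
    have "\<bar>mv dm (Wt t) L (z r) 0\<bar> \<le> L2_set (mv dm (Wt t) L (z r)) {..<dm L}"
      using dmL by (intro abs_le_L2) auto
    also have "\<dots> \<le> R ^ L * L2_set (z r) {..<dm 0}"
      using Wb R_ge by (intro mv_bound) auto
    also have "\<dots> \<le> R ^ L * 1" using zn that R_ge by (intro mult_left_mono) auto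
    finally show ?thesis by simp
  qed
  have "\<exists>xm\<in>{-(R ^ L)..R ^ L}. \<forall>v\<in>{-(R ^ L)..R ^ L}. dl v \<le> dl xm"
    using R_ge by (intro continuous_attains_sup compact_Icc continuous_on_subset[OF A1_cont]) auto
  then obtain xm where xm: "\<forall>v\<in>{-(R ^ L)..R ^ L}. dl v \<le> dl xm" by blast
  define c0 where "c0 = - dl xm"
  have c00: "0 < c0" unfolding c0_def using A1_neg by simp
  have dlneg: "\<forall>r<n. dl (mv dm (Wt t) L (z r) 0) \<le> - c0" for t
  proof (intro allI impI)
    fix r assume "r < n"
    then have "mv dm (Wt t) L (z r) 0 \<in> {-(R ^ L)..R ^ L}" using gb[of r t] by (auto simp: abs_le_iff)
    then show "dl (mv dm (Wt t) L (z r) 0) \<le> - c0" using xm unfolding c0_def by simp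
  qed
  obtain u where u: "\<forall>i<n. (\<Sum>j<d. u j * (y i * x i j)) > 0" using separable by blast
  define \<gamma> where "\<gamma> = Min ((\<lambda>i. \<Sum>j<dm 0. u j * z i j) ` {..<n})"
  have g0: "0 < \<gamma>" unfolding \<gamma>_def using n0 u dims(1) unfolding z_def by (subst Min_gr_iff) auto
  have sep: "\<forall>r<n. \<gamma> \<le> (\<Sum>j<dm 0. u j * z r j)" unfolding \<gamma>_def by (auto intro: Min_le)
  define Uu where "Uu = L2_set u {..<dm 0}"
  have Uu0: "0 < Uu"
  proof -
    have "Uu \<noteq> 0"
    proof
      assume "Uu = 0"
      then have "\<forall>j\<in>{..<dm 0}. u j = 0" unfolding Uu_def by (subst (asm) L2_set_eq_0_iff) auto
      then have "(\<Sum>j<dm 0. u j * z 0 j) = 0" by simp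
      then show False using sep n0 g0 by force
    qed
    then show ?thesis using L2_set_nonneg[of u "{..<dm 0}"] unfolding Uu_def by linarith
  qed
  define c where "c = (\<delta> / G / R)\<^sup>2 * (c0 * \<gamma> / Uu)\<^sup>2"
  have cpos: "0 < c" unfolding c_def using d0 G0 R_ge c00 g0 Uu0 by simp
  have Nlow: "c \<le> N t" if t1: "1 \<le> t" for t
  proof -
    have "\<exists>r<n. l (mv dm (Wt t) L (z r) 0) \<le> l 0 - \<delta>"
    proof (rule ccontr)
      assume "\<not> ?thesis"
      then have all: "\<forall>r<n. l 0 - \<delta> < l (mv dm (Wt t) L (z r) 0)" by auto
      have "(\<Sum>r<n. l 0 - \<delta>) < (\<Sum>r<n. l (mv dm (Wt t) L (z r) 0))"
        using n0 all by (intro sum_strict_mono) auto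
      then have "l 0 - \<delta> < Phi t" unfolding Phi_eq using n0 by (simp add: field_simps)
      then show False using mono[OF t1] unfolding \<delta>_def by simp
    qed
    then obtain r where r: "r < n" "l (mv dm (Wt t) L (z r) 0) \<le> l 0 - \<delta>" by blast
    define gr where "gr = mv dm (Wt t) L (z r) 0"
    have gpos: "0 < gr"
    proof (rule ccontr)
      assume "\<not> 0 < gr"
      then have "l 0 \<le> l gr" by (intro l_decr[OF A1_deriv A1_neg]) auto
      then show False using r d0 unfolding gr_def by simp
    qed
    have "\<bar>l gr - l 0\<bar> \<le> G * (gr - 0)"
      using gpos A1_deriv A4_bnd by (intro lip_deriv[where f'=dl]) auto
    then have "\<delta> \<le> G * gr" using r unfolding gr_def by (simp add: abs_le_iff)
    then have m: "\<delta> / G \<le> gr" using G0 by (simp add: divide_le_eq mult.commute)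
    have "(\<delta> / G / R)\<^sup>2 * (c0 * \<gamma> / Uu)\<^sup>2 \<le> (\<Sum>p\<in>PP dm L. (Gd dl n z dm L (Wt t) p)\<^sup>2)"
    proof (rule grad_lower[where dm=dm and L=L and R=R and n=n and z=z])
      show "\<exists>r<n. \<delta> / G \<le> mv dm (Wt t) L (z r) 0" using r m unfolding gr_def by blast
    qed (use L_pos dmL Wb R_ge n0 zn d0 G0 dlneg c00 sep g0 in \<open>auto simp: Uu_def\<close>)
    then show ?thesis unfolding c_def N_def .
  qed
  have tele: "Phi (Suc t) \<le> Phi 1 - real t * (eta / 2 * c)" for t
  proof (induction t)
    case 0
    then show ?case by simp
  next
    case (Suc t)
    have "Phi (Suc (Suc t)) \<le> Phi (Suc t) - eta / 2 * N (Suc t)" by (rule desc)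
    also have "\<dots> \<le> Phi (Suc t) - eta / 2 * c" using Nlow[of "Suc t"] eta0 by simp
    finally have "Phi (Suc (Suc t)) \<le> Phi (Suc t) - eta / 2 * c" .
    moreover have "real (Suc t) * (eta / 2 * c) = real t * (eta / 2 * c) + eta / 2 * c" by (simp add: algebra_simps)
    ultimately show ?case using Suc by linarith
  qed
  obtain T where T: "Phi 1 / (eta / 2 * c) < real T" using reals_Archimedean2 by blast
  have "Phi 1 < real T * (eta / 2 * c)" using T eta0 cpos by (simp add: divide_less_eq)
  then have "Phi (Suc T) < 0" using tele[of T] by simp
  then show False using Phi0[of "Suc T"] by simp
qed


end
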